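(* For every $w\in\mathfrak S(n)$, $$g_w\in T_w+\sum_{w'\in\mathfrak S(n),\ w'<w}R[t_1,\ldots,t_n]\,T_{w'},$$ where $<$ is the (strict) Bruhat order on $\mathfrak S(n)$.
   Context: Standing setup: $R$ is an integral domain, $n\ge 2$, $r\ge 1$, and $q,u_1,\ldots,u_r\in R$ with $q$ invertible in $R$ and $\Delta:=\prod_{1\le j<i\le r}(u_i-u_j)$ invertible in $R$. For $1\le c\le r$ let $F_c(X)\in R[X]$ be the unique polynomial of degree $\le r-1$ with $F_c(u_{c'})=\delta_{c,c'}\Delta$ for all $1\le c'\le r$. The modified Ariki–Koike (Shoji) algebra $\mathcal H_{n,r}=\mathcal H_{n,r}(R,q,u_1,\ldots,u_r)$ is the associative $R$-algebra generated by $t_1,\ldots,t_n,T_1,\ldots,T_{n-1}$ subject to: $(T_i-q)(T_i+q^{-1})=0$; $(t_i-u_1)\cdots(t_i-u_r)=0$; $T_iT_{i+1}T_i=T_{i+1}T_iT_{i+1}$; $T_iT_j=T_jT_i$ for $|i-j|\ge2$; $t_it_j=t_jt_i$; $T_jt_k=t_kT_j$ for $k\ne j,j+1$; and for $2\le j\le n$: $T_{j-1}t_j=t_{j-1}T_{j-1}+\Delta^{-2}\sum_{1\le c_1<c_2\le r}(u_{c_2}-u_{c_1})(q-q^{-1})F_{c_1}(t_{j-1})F_{c_2}(t_j)$ and $T_{j-1}t_{j-1}=t_jT_{j-1}-\Delta^{-2}\sum_{1\le c_1<c_2\le r}(u_{c_2}-u_{c_1})(q-q^{-1})F_{c_1}(t_{j-1})F_{c_2}(t_j)$.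 Write $[1,r]=\{1,\ldots,r\}$; for $\mathbf k=(k_1,\ldots,k_n)\in[1,r]^n$ set $b_{\mathbf k}:=\prod_{i=1}^n\prod_{1\le j\le r,\,j\ne k_i}\frac{t_i-u_j}{u_{k_i}-u_j}$. For $1\le i,j\le n$ let $B'_{i,j}:=-(q-q^{-1})\sum_{\mathbf k,\ k_i<k_j}b_{\mathbf k}$, and for $1\le i\le n-1$ let $g_i:=T_i+B'_{i,i+1}$. For $w\in\mathfrak S(n)$ with reduced expression $w=s_{i_1}\cdots s_{i_l}$ ($s_i=(i\ i+1)$), set $T_w:=T_{i_1}\cdots T_{i_l}$ and $g_w:=g_{i_1}\cdots g_{i_l}$; both are independent of the reduced expression since the $T_i$ and the $g_i$ satisfy the braid relations. $R[t_1,\ldots,t_n]$ is the subalgebra generated by $t_1,\ldots,t_n$. *)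

theory Defs
  imports "HOL-Computational_Algebra.Polynomial" "HOL-Combinatorics.Permutations"
    "HOL-Combinatorics.Transposition" "HOL-Library.FuncSet"
begin

definition rinv :: "'r::idom \<Rightarrow> 'r" where
  "rinv x = (THE y. x * y = 1)"

definition Delta :: "nat \<Rightarrow> (nat \<Rightarrow> 'r::idom) \<Rightarrow> 'r" where
  "Delta r u = (\<Prod>(j,i)\<in>{(j,i). 1 \<le> j \<and> j < i \<and> i \<le> r}. u i - u j)"

definition Fpol :: "nat \<Rightarrow> (nat \<Rightarrow> 'r::idom) \<Rightarrow> nat \<Rightarrow> 'r poly" where
  "Fpol r u c = (THE p. degree p \<le> r - 1 \<and>
      (\<forall>c'\<in>{1..r}. poly p (u c') = (if c' = c then Delta r u else 0)))"

definition peval :: "('r::idom \<Rightarrow> 'a::ring_1) \<Rightarrow> 'r poly \<Rightarrow> 'a \<Rightarrow> 'a" where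
  "peval \<phi> p x = (\<Sum>i\<le>degree p. \<phi> (coeff p i) * x ^ i)"

definition mixterm :: "nat \<Rightarrow> 'r::idom \<Rightarrow> (nat \<Rightarrow> 'r) \<Rightarrow> ('r \<Rightarrow> 'a::ring_1)
    \<Rightarrow> (nat \<Rightarrow> 'a) \<Rightarrow> nat \<Rightarrow> 'a" where
  "mixterm r q u \<phi> t j = \<phi> ((rinv (Delta r u))^2) *
     (\<Sum>(c1,c2)\<in>{(c1,c2). 1 \<le> c1 \<and> c1 < c2 \<and> c2 \<le> r}.
        \<phi> ((u c2 - u c1) * (q - rinv q)) * peval \<phi> (Fpol r u c1) (t (j - 1))
          * peval \<phi> (Fpol r u c2) (t j))"

definition is_R_algebra :: "('r::idom \<Rightarrow> 'a::ring_1) \<Rightarrow> bool" where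
  "is_R_algebra \<phi> \<longleftrightarrow> \<phi> 1 = 1 \<and> (\<forall>x y. \<phi> (x + y) = \<phi> x + \<phi> y)
     \<and> (\<forall>x y. \<phi> (x * y) = \<phi> x * \<phi> y) \<and> (\<forall>x a. \<phi> x * a = a * \<phi> x)"

text \<open>t_1..t_n, T_1..T_{n-1} in A satisfy the defining relations of the modified
  Ariki-Koike (Shoji) algebra H_{n,r}(R,q,u_1,...,u_r).\<close>
definition shoji_relations :: "nat \<Rightarrow> nat \<Rightarrow> 'r::idom \<Rightarrow> (nat \<Rightarrow> 'r) \<Rightarrow> ('r \<Rightarrow> 'a::ring_1)
    \<Rightarrow> (nat \<Rightarrow> 'a) \<Rightarrow> (nat \<Rightarrow> 'a) \<Rightarrow> bool" where
  "shoji_relations n r q u \<phi> t T \<longleftrightarrow>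
     (\<forall>i\<in>{1..<n}. (T i - \<phi> q) * (T i + \<phi> (rinv q)) = 0)
   \<and> (\<forall>i\<in>{1..n}. prod_list (map (\<lambda>c. t i - \<phi> (u c)) [1..<r+1]) = 0)
   \<and> (\<forall>i. 1 \<le> i \<and> i + 1 < n \<longrightarrow> T i * T (i+1) * T i = T (i+1) * T i * T (i+1))
   \<and> (\<forall>i\<in>{1..<n}. \<forall>j\<in>{1..<n}. (i + 2 \<le> j \<or> j + 2 \<le> i) \<longrightarrow> T i * T j = T j * T i)
   \<and> (\<forall>i\<in>{1..n}. \<forall>j\<in>{1..n}. t i * t j = t j * t i)
   \<and> (\<forall>j\<in>{1..<n}. \<forall>k\<in>{1..n}. k \<noteq> j \<and> k \<noteq> j + 1 \<longrightarrow> T j * t k = t k * T j)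
   \<and> (\<forall>j\<in>{2..n}. T (j-1) * t j = t (j-1) * T (j-1) + mixterm r q u \<phi> t j)
   \<and> (\<forall>j\<in>{2..n}. T (j-1) * t (j-1) = t j * T (j-1) - mixterm r q u \<phi> t j)"

definition bk :: "nat \<Rightarrow> nat \<Rightarrow> (nat \<Rightarrow> 'r::idom) \<Rightarrow> ('r \<Rightarrow> 'a::ring_1)
    \<Rightarrow> (nat \<Rightarrow> 'a) \<Rightarrow> (nat \<Rightarrow> nat) \<Rightarrow> 'a" where
  "bk n r u \<phi> t k = prod_list (map (\<lambda>i. prod_list (map (\<lambda>j. (t i - \<phi> (u j)) * \<phi> (rinv (u (k i) - u j)))
        (filter (\<lambda>j. j \<noteq> k i) [1..<r+1]))) [1..<n+1])"

definition Bp :: "nat \<Rightarrow> nat \<Rightarrow> 'r::idom \<Rightarrow> (nat \<Rightarrow> 'r) \<Rightarrow> ('r \<Rightarrow> 'a::ring_1)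
    \<Rightarrow> (nat \<Rightarrow> 'a) \<Rightarrow> nat \<Rightarrow> nat \<Rightarrow> 'a" where
  "Bp n r q u \<phi> t i j = \<phi> (- (q - rinv q)) *
     (\<Sum>k\<in>{k \<in> {1..n} \<rightarrow>\<^sub>E {1..r}. k i < k j}. bk n r u \<phi> t k)"

definition gen :: "nat \<Rightarrow> nat \<Rightarrow> 'r::idom \<Rightarrow> (nat \<Rightarrow> 'r) \<Rightarrow> ('r \<Rightarrow> 'a::ring_1)
    \<Rightarrow> (nat \<Rightarrow> 'a) \<Rightarrow> (nat \<Rightarrow> 'a) \<Rightarrow> nat \<Rightarrow> 'a" where
  "gen n r q u \<phi> t T i = T i + Bp n r q u \<phi> t i (i + 1)"

definition is_word :: "nat \<Rightarrow> nat list \<Rightarrow> bool" where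
  "is_word n ws \<longleftrightarrow> set ws \<subseteq> {1..<n}"

definition sprod :: "nat list \<Rightarrow> nat \<Rightarrow> nat" where
  "sprod ws = foldr (\<lambda>i p. transpose i (Suc i) \<circ> p) ws id"

definition plen :: "nat \<Rightarrow> (nat \<Rightarrow> nat) \<Rightarrow> nat" where
  "plen n w = (LEAST l. \<exists>ws. is_word n ws \<and> length ws = l \<and> sprod ws = w)"

definition reduced :: "nat \<Rightarrow> nat list \<Rightarrow> (nat \<Rightarrow> nat) \<Rightarrow> bool" where
  "reduced n ws w \<longleftrightarrow> is_word n ws \<and> sprod ws = w \<and> length ws = plen n w"

definition redword :: "nat \<Rightarrow> (nat \<Rightarrow> nat) \<Rightarrow> nat list" where
  "redword n w = (SOME ws. reduced n ws w)"

definition Tw :: "nat \<Rightarrow> (nat \<Rightarrow> 'a::ring_1) \<Rightarrow> (nat \<Rightarrow> nat) \<Rightarrow> 'a" where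
  "Tw n T w = prod_list (map T (redword n w))"

definition gw :: "nat \<Rightarrow> nat \<Rightarrow> 'r::idom \<Rightarrow> (nat \<Rightarrow> 'r) \<Rightarrow> ('r \<Rightarrow> 'a::ring_1)
    \<Rightarrow> (nat \<Rightarrow> 'a) \<Rightarrow> (nat \<Rightarrow> 'a) \<Rightarrow> (nat \<Rightarrow> nat) \<Rightarrow> 'a" where
  "gw n r q u \<phi> t T w = prod_list (map (gen n r q u \<phi> t T) (redword n w))"

definition bruhat_step :: "nat \<Rightarrow> (nat \<Rightarrow> nat) \<Rightarrow> (nat \<Rightarrow> nat) \<Rightarrow> bool" where
  "bruhat_step n v v' \<longleftrightarrow> v permutes {1..n} \<and>
     (\<exists>a b. 1 \<le> a \<and> a < b \<and> b \<le> n \<and> v' = v \<circ> transpose a b) \<and> plen n v < plen n v'"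

definition bruhat_lt :: "nat \<Rightarrow> (nat \<Rightarrow> nat) \<Rightarrow> (nat \<Rightarrow> nat) \<Rightarrow> bool" where
  "bruhat_lt n = (bruhat_step n)\<^sup>+\<^sup>+"

inductive_set Rt :: "('r::idom \<Rightarrow> 'a::ring_1) \<Rightarrow> (nat \<Rightarrow> 'a) \<Rightarrow> nat \<Rightarrow> 'a set"
  for \<phi> t n where
  scal: "\<phi> c \<in> Rt \<phi> t n"
| gen_t: "i \<in> {1..n} \<Longrightarrow> t i \<in> Rt \<phi> t n"
| add: "x \<in> Rt \<phi> t n \<Longrightarrow> y \<in> Rt \<phi> t n \<Longrightarrow> x + y \<in> Rt \<phi> t n"
| mult: "x \<in> Rt \<phi> t n \<Longrightarrow> y \<in> Rt \<phi> t n \<Longrightarrow> x * y \<in> Rt \<phi> t n"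
| neg: "x \<in> Rt \<phi> t n \<Longrightarrow> - x \<in> Rt \<phi> t n"

end

theory Submission
  imports Defs
begin


definition Inv :: "nat \<Rightarrow> (nat \<Rightarrow> nat) \<Rightarrow> (nat \<times> nat) set" where
  "Inv n x = {(p,q). 1 \<le> p \<and> p < q \<and> q \<le> n \<and> x q < x p}"

definition ninv :: "nat \<Rightarrow> (nat \<Rightarrow> nat) \<Rightarrow> nat" where
  "ninv n x = card (Inv n x)"

lemma finite_Inv[simp]: "finite (Inv n x)"
  by (rule finite_subset[of _ "{1..n} \<times> {1..n}"]) (auto simp: Inv_def)

lemma transpose_less_iff:
  assumes "y \<noteq> z"
  shows "transpose i (Suc i) y < transpose i (Suc i) z \<longleftrightarrow>
    (if (y = i \<and> z = Suc i) \<or> (y = Suc i \<and> z = i) then z < y else y < z)"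
  using assms by (auto simp: transpose_def)

lemma Inv_s:
  assumes x: "x permutes {1..n}" and i: "i \<in> {1..<n}"
  defines "a \<equiv> inv x i" and "b \<equiv> inv x (Suc i)"
  shows "Inv n (transpose i (Suc i) \<circ> x) =
     (if a < b then insert (a,b) (Inv n x) else Inv n x - {(b,a)})"
    and "a < b \<Longrightarrow> (a,b) \<notin> Inv n x"
    and "\<not> a < b \<Longrightarrow> (b,a) \<in> Inv n x"
proof -
  have xa: "x a = i" and xb: "x b = Suc i" using x unfolding a_def b_def
    by (auto simp: permutes_inverses)
  have xi: "\<And>k. inv x k \<in> {1..n} \<longleftrightarrow> k \<in> {1..n}"
    by (rule permutes_in_image[OF permutes_inv[OF x]])
  have ab: "a \<in> {1..n}" "b \<in> {1..n}" unfolding a_def b_def xi using i by auto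
  have abne: "a \<noteq> b" using xa xb by auto
  have inj: "inj x" using x permutes_inj by blast
  have key: "\<And>p q. p \<noteq> q \<Longrightarrow> ((transpose i (Suc i) \<circ> x) q < (transpose i (Suc i) \<circ> x) p \<longleftrightarrow>
     (if (p = a \<and> q = b) \<or> (p = b \<and> q = a) then x p < x q else x q < x p))"
  proof -
    fix p q :: nat assume pq: "p \<noteq> q"
    have "x q \<noteq> x p" using inj pq by (auto dest: injD)
    moreover have "(x q = i \<and> x p = Suc i) \<or> (x q = Suc i \<and> x p = i) \<longleftrightarrow> (p = a \<and> q = b) \<or> (p = b \<and> q = a)"
    proof -
      have e: "\<And>z y. x z = y \<longleftrightarrow> z = inv x y" using permutes_inv_eq[OF x] by metis
      show ?thesis unfolding e a_def b_def by blast
    qed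
    ultimately show "?thesis p q" by (simp add: transpose_less_iff)
  qed
  have memI: "\<And>y p q. (p,q) \<in> Inv n y \<longleftrightarrow> 1 \<le> p \<and> p < q \<and> q \<le> n \<and> y q < y p"
    by (simp add: Inv_def)
  show "Inv n (transpose i (Suc i) \<circ> x) =
     (if a < b then insert (a,b) (Inv n x) else Inv n x - {(b,a)})"
  proof (rule set_eqI)
    fix z :: "nat \<times> nat"
    obtain p q where z: "z = (p,q)" by (cases z)
    show "z \<in> Inv n (transpose i (Suc i) \<circ> x) \<longleftrightarrow>
      z \<in> (if a < b then insert (a,b) (Inv n x) else Inv n x - {(b,a)})"
    proof (cases "p < q")
      case False thus ?thesis unfolding z memI
        by (cases "a < b") (simp_all add: memI)
    next
      case True
      hence pq: "p \<noteq> q" by simp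
      show ?thesis
      proof (cases "(p = a \<and> q = b) \<or> (p = b \<and> q = a)")
        case T: True 
        show ?thesis
        proof (cases "p = a")
          case True
          with T pq have q: "q = b" by auto
          have "a < b" using \<open>p < q\<close> True q by simp
          show ?thesis unfolding z memI key[OF pq] if_P[OF T] True q
            using \<open>a < b\<close> ab xa xb by simp
        next
          case False
          with T have pq': "p = b" "q = a" by auto
          have "\<not> a < b" using \<open>p < q\<close> pq' by simp
          show ?thesis unfolding z memI key[OF pq] if_P[OF T] pq'
            using \<open>\<not> a < b\<close> ab xa xb by simp
        qed
      next
        case F: False thus ?thesis unfolding z memI key[OF pq] if_not_P[OF F]
          by (cases "a < b") (auto simp add: memI)
      qed
    qed
  qed
  show "a < b \<Longrightarrow> (a,b) \<notin> Inv n x" using xa xb by (auto simp: Inv_def)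
  show "\<not> a < b \<Longrightarrow> (b,a) \<in> Inv n x" using xa xb ab abne by (auto simp: Inv_def)
qed

abbreviation sg :: "nat \<Rightarrow> nat \<Rightarrow> nat" where "sg i \<equiv> transpose i (Suc i)"

lemma ninv_s:
  assumes x: "x permutes {1..n}" and i: "i \<in> {1..<n}"
  shows "inv x i < inv x (Suc i) \<Longrightarrow> ninv n (sg i \<circ> x) = Suc (ninv n x)"
    and "\<not> inv x i < inv x (Suc i) \<Longrightarrow> Suc (ninv n (sg i \<circ> x)) = ninv n x"
proof -
  note I = Inv_s[OF x i]
  show "inv x i < inv x (Suc i) \<Longrightarrow> ninv n (sg i \<circ> x) = Suc (ninv n x)"
    unfolding ninv_def I(1) using I(2) by simp
  show "\<not> inv x i < inv x (Suc i) \<Longrightarrow> Suc (ninv n (sg i \<circ> x)) = ninv n x"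
  proof -
    assume h: "\<not> inv x i < inv x (Suc i)"
    have "card (Inv n x) > 0" using I(3)[OF h] card_gt_0_iff by fastforce
    thus ?thesis unfolding ninv_def I(1) using I(3)[OF h] h by simp
  qed
qed

lemma inv_ne:
  assumes x: "x permutes {1..n}"
  shows "inv x i \<noteq> inv x (Suc i)"
proof
  assume "inv x i = inv x (Suc i)"
  hence "x (inv x i) = x (inv x (Suc i))" by simp
  thus False using x by (simp add: permutes_inverses)
qed

lemma ninv_desc:
  assumes x: "x permutes {1..n}" and i: "i \<in> {1..<n}"
  shows "ninv n (sg i \<circ> x) < ninv n x \<longleftrightarrow> inv x (Suc i) < inv x i"
  using ninv_s[OF x i] inv_ne[OF x, of i] by (cases "inv x i < inv x (Suc i)") auto

lemma ninv_s_cases: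
  assumes x: "x permutes {1..n}" and i: "i \<in> {1..<n}"
  shows "ninv n (sg i \<circ> x) = Suc (ninv n x) \<or> Suc (ninv n (sg i \<circ> x)) = ninv n x"
  using ninv_s[OF x i] by (cases "inv x i < inv x (Suc i)") auto

lemma sprod_Nil[simp]: "sprod [] = id" by (simp add: sprod_def)
lemma sprod_Cons[simp]: "sprod (i # ws) = sg i \<circ> sprod ws" by (simp add: sprod_def)

lemma is_word_Cons[simp]: "is_word n (i # ws) \<longleftrightarrow> i \<in> {1..<n} \<and> is_word n ws"
  by (simp add: is_word_def)
lemma is_word_Nil[simp]: "is_word n []" by (simp add: is_word_def)

lemma sg_permutes: "i \<in> {1..<n} \<Longrightarrow> sg i permutes {1..n}"
  by (rule permutes_swap_id) auto

lemma sprod_permutes: "is_word n ws \<Longrightarrow> sprod ws permutes {1..n}"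
proof (induction ws)
  case (Cons i ws)
  hence "sprod ws permutes {1..n}" "i \<in> {1..<n}" by simp_all
  thus ?case unfolding sprod_Cons by (rule permutes_compose[OF _ sg_permutes])
qed (simp add: permutes_id)

lemma ninv_id[simp]: "ninv n id = 0"
proof -
  have "Inv n id = {}" by (auto simp: Inv_def)
  thus ?thesis by (simp add: ninv_def)
qed

lemma ninv_le_length: "is_word n ws \<Longrightarrow> ninv n (sprod ws) \<le> length ws"
proof (induction ws)
  case (Cons i ws)
  hence "is_word n ws" "i \<in> {1..<n}" by simp_all
  from ninv_s_cases[OF sprod_permutes[OF this(1)] this(2)] Cons.IH this
  have "ninv n (sg i \<circ> sprod ws) \<le> Suc (length ws)" by linarith
  thus ?case by (metis sprod_Cons length_Cons)
qed simp

lemma no_desc_id: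
  assumes y: "y permutes {1..n}" and d: "\<forall>i\<in>{1..<n}. y i < y (Suc i)"
  shows "y = id"
proof -
  have ge: "k \<le> n \<Longrightarrow> 1 \<le> k \<Longrightarrow> k \<le> y k" for k
  proof (induction k)
    case 0 thus ?case by simp
  next
    case (Suc k)
    show ?case
    proof (cases "k = 0")
      case True
      have "y 1 \<in> {1..n}" using permutes_in_image[OF y, of 1] Suc.prems True by simp
      thus ?thesis using True by simp
    next
      case False
      hence "k \<le> y k" using Suc by simp
      moreover have "y k < y (Suc k)" using d Suc.prems False by auto
      ultimately show ?thesis by simp
    qed
  qed
  have le: "m \<le> n - 1 \<Longrightarrow> 1 \<le> n - m \<Longrightarrow> y (n - m) \<le> n - m" for m
  proof (induction m)
    case 0
    have "n \<in> {1..n}" using 0 by simp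
    hence "y n \<in> {1..n}" using permutes_in_image[OF y] by simp
    thus ?case by simp
  next
    case (Suc m)
    have "y (n - Suc m) < y (Suc (n - Suc m))" using d Suc.prems by auto
    moreover have "Suc (n - Suc m) = n - m" using Suc.prems by simp
    ultimately show ?case using Suc by simp
  qed
  show ?thesis
  proof
    fix k
    show "y k = id k"
    proof (cases "k \<in> {1..n}")
      case True
      hence nk: "n - (n - k) = k" by simp
      have h1: "n - k \<le> n - 1" "1 \<le> n - (n - k)" using True by auto
      have "y k \<le> k" using le[OF h1] unfolding nk .
      thus ?thesis using ge[of k] True by simp
    next
      case False thus ?thesis using y by (simp add: permutes_not_in)
    qed
  qed
qed

lemma exists_word:
  "x permutes {1..n} \<Longrightarrow> \<exists>ws. is_word n ws \<and> sprod ws = x \<and> length ws = ninv n x"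
proof (induction "ninv n x" arbitrary: x)
  case 0
  show ?case
  proof (cases "\<forall>i\<in>{1..<n}. inv x i < inv x (Suc i)")
    case True
    hence "inv x = id" using no_desc_id[OF permutes_inv[OF 0(2)]] by simp
    hence "x = id" by (metis inv_id inv_inv_eq permutes_bij[OF 0(2)] bij_is_inj)
    thus ?thesis using 0 by (intro exI[of _ "[]"]) simp
  next
    case False
    then obtain i where i: "i \<in> {1..<n}" "\<not> inv x i < inv x (Suc i)" by auto
    from ninv_s(2)[OF 0(2) i] 0(1) show ?thesis by simp
  qed
next
  case (Suc m)
  show ?case
  proof (cases "\<forall>i\<in>{1..<n}. inv x i < inv x (Suc i)")
    case True
    hence "inv x = id" using no_desc_id[OF permutes_inv[OF Suc(3)]] by simp
    hence "x = id" by (metis inv_id inv_inv_eq permutes_bij[OF Suc(3)] bij_is_inj)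
    thus ?thesis using Suc by simp
  next
    case False
    then obtain i where i: "i \<in> {1..<n}" "\<not> inv x i < inv x (Suc i)" by auto
    have e: "Suc (ninv n (sg i \<circ> x)) = ninv n x" using ninv_s(2)[OF Suc(3) i] .
    have p: "sg i \<circ> x permutes {1..n}" by (rule permutes_compose[OF Suc(3) sg_permutes[OF i(1)]])
    obtain ws where ws: "is_word n ws" "sprod ws = sg i \<circ> x" "length ws = ninv n (sg i \<circ> x)"
      using Suc(1)[of "sg i \<circ> x"] e Suc(2) p by auto
    have "sprod (i # ws) = x" using ws(2) by (simp add: comp_assoc[symmetric] o_def)
    thus ?thesis using ws i e by (intro exI[of _ "i # ws"]) simp
  qed
qed

lemma plen_eq:
  assumes "x permutes {1..n}" shows "plen n x = ninv n x"
  unfolding plen_def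
proof (rule Least_equality)
  show "\<exists>ws. is_word n ws \<and> length ws = ninv n x \<and> sprod ws = x"
    using exists_word[OF assms] by auto
  show "\<And>l. \<exists>ws. is_word n ws \<and> length ws = l \<and> sprod ws = x \<Longrightarrow> ninv n x \<le> l"
    using ninv_le_length by blast
qed

lemma reduced_iff:
  "reduced n ws w \<longleftrightarrow> is_word n ws \<and> sprod ws = w \<and> length ws = ninv n w"
  unfolding reduced_def using plen_eq sprod_permutes by metis

lemma redword:
  assumes "x permutes {1..n}" shows "reduced n (redword n x) x"
  unfolding redword_def
  by (rule someI_ex) (use exists_word[OF assms] reduced_iff in blast)




lemma sg_sg: "sg i \<circ> (sg i \<circ> f) = f"
  by (simp add: comp_assoc[symmetric])

lemma sg_comm: "Suc i < j \<or> Suc j < i \<Longrightarrow> sg i \<circ> sg j = sg j \<circ> sg i"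
  by (rule ext) (auto simp: transpose_def)

lemma sg_braid: "sg i \<circ> (sg (Suc i) \<circ> sg i) = sg (Suc i) \<circ> (sg i \<circ> sg (Suc i))"
  by (rule ext) (auto simp: transpose_def)

lemma inv_sg_comp: "w permutes S \<Longrightarrow> inv (sg i \<circ> w) = inv w \<circ> sg i"
  by (simp add: o_inv_distrib permutes_bij)

lemma desc_of_reduced:
  assumes "reduced n (s # a) w"
  shows "inv w (Suc s) < inv w s" and "reduced n a (sg s \<circ> w)" and "w permutes {1..n}"
    and "s \<in> {1..<n}"
proof -
  have r: "is_word n (s # a)" "sprod (s # a) = w" "length (s # a) = ninv n w"
    using assms reduced_iff by blast+
  show wp: "w permutes {1..n}" using sprod_permutes[OF r(1)] r(2) by simp
  show s: "s \<in> {1..<n}" using r(1) by simp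
  have a: "sprod a = sg s \<circ> w" using r(2) by (auto simp: sg_sg[symmetric])
  have le: "ninv n (sg s \<circ> w) \<le> length a" using ninv_le_length[of n a] r(1) a by simp
  hence "ninv n (sg s \<circ> w) < ninv n w" using r(3) by simp
  thus "inv w (Suc s) < inv w s" using ninv_desc[OF wp s] by simp
  have "ninv n (sg s \<circ> w) = length a"
    using ninv_s_cases[OF wp s] le r(3) by auto
  thus "reduced n a (sg s \<circ> w)" using reduced_iff r(1) a by auto
qed

lemma reduced_Cons:
  assumes "reduced n r x" "i \<in> {1..<n}" "inv x i < inv x (Suc i)"
  shows "reduced n (i # r) (sg i \<circ> x)"
proof -
  have r: "is_word n r" "sprod r = x" "length r = ninv n x" using assms(1) reduced_iff by blast+
  have xp: "x permutes {1..n}" using sprod_permutes[OF r(1)] r(2) by simp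
  show ?thesis unfolding reduced_iff using r ninv_s(1)[OF xp assms(2,3)] assms(2) by simp
qed

lemma reduced_exists: "x permutes {1..n} \<Longrightarrow> \<exists>r. reduced n r x"
  using redword by blast

locale braidT =
  fixes n :: nat and T :: "nat \<Rightarrow> 'a::monoid_mult"
  assumes braid: "\<And>i. 1 \<le> i \<Longrightarrow> i + 1 < n \<Longrightarrow> T i * T (i+1) * T i = T (i+1) * T i * T (i+1)"
    and comm: "\<And>i j. i \<in> {1..<n} \<Longrightarrow> j \<in> {1..<n} \<Longrightarrow> i + 2 \<le> j \<or> j + 2 \<le> i \<Longrightarrow> T i * T j = T j * T i"
begin

abbreviation Tp :: "nat list \<Rightarrow> 'a" where "Tp ws \<equiv> prod_list (map T ws)"

lemma matsumoto_aux:
  "length ws1 = L \<Longrightarrow> reduced n ws1 w \<Longrightarrow> reduced n ws2 w \<Longrightarrow> Tp ws1 = Tp ws2"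
proof (induction L arbitrary: ws1 ws2 w rule: less_induct)
  case (less L)
  have IH: "\<And>ws1 ws2 w. length ws1 < L \<Longrightarrow> reduced n ws1 w \<Longrightarrow> reduced n ws2 w \<Longrightarrow> Tp ws1 = Tp ws2"
    using less.IH by blast
  have len2: "length ws2 = length ws1" using less.prems reduced_def by metis
  show ?case
  proof (cases ws1)
    case Nil thus ?thesis using len2 by simp
  next
    case (Cons s a)
    then obtain t b where ws2: "ws2 = t # b" using len2 by (cases ws2) auto
    note d1 = desc_of_reduced[OF less.prems(2)[unfolded Cons]]
    note d2 = desc_of_reduced[OF less.prems(3)[unfolded ws2]]
    have la: "length a < L" using less.prems(1) Cons by simp
    have lb: "length b < L" using less.prems(1) Cons ws2 len2 by simp
    have wp: "w permutes {1..n}" by (rule d1(3))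
    have adj: "Tp (s # a) = Tp (t # b)"
      if st: "t = Suc s" and ds: "inv w (Suc s) < inv w s" and dt: "inv w (Suc t) < inv w t"
        and ra: "reduced n a (sg s \<circ> w)" and rb: "reduced n b (sg t \<circ> w)"
        and s: "s \<in> {1..<n}" and t: "t \<in> {1..<n}"
        and la: "length a < L" and lb: "length b < L"
      for s t a b
    proof -
      define w1 where "w1 = sg s \<circ> w"
      define w2 where "w2 = sg t \<circ> w1"
      define x where "x = sg s \<circ> w2"
      have w1p: "w1 permutes {1..n}" unfolding w1_def by (rule permutes_compose[OF wp sg_permutes[OF s]])
      have w2p: "w2 permutes {1..n}" unfolding w2_def by (rule permutes_compose[OF w1p sg_permutes[OF t]])
      have xp: "x permutes {1..n}" unfolding x_def by (rule permutes_compose[OF w2p sg_permutes[OF s]])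
      have iw1: "inv w1 = inv w \<circ> sg s" unfolding w1_def by (rule inv_sg_comp[OF wp])
      have iw2: "inv w2 = inv w \<circ> sg s \<circ> sg t" unfolding w2_def iw1[symmetric] by (rule inv_sg_comp[OF w1p])
      have ix: "inv x = inv w \<circ> sg s \<circ> sg t \<circ> sg s" unfolding x_def iw2[symmetric] by (rule inv_sg_comp[OF w2p])
      obtain r where r: "reduced n r x" using reduced_exists[OF xp] by blast
      have hd1: "inv x s < inv x (Suc s)" using dt st unfolding ix by simp
      have r1: "reduced n (s # r) w2" using reduced_Cons[OF r s hd1] by (simp add: x_def sg_sg)
      have hd2: "inv w2 t < inv w2 (Suc t)" using dt ds st unfolding iw2 by simp
      have r2: "reduced n (t # s # r) w1" using reduced_Cons[OF r1 t hd2] by (simp add: w2_def sg_sg)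
      have ea: "Tp a = Tp (t # s # r)" using IH[OF la ra[folded w1_def] r2] .
      have hd3: "inv x t < inv x (Suc t)" using ds st unfolding ix by simp
      have r3: "reduced n (t # r) (sg t \<circ> x)" using reduced_Cons[OF r t hd3] by simp
      have hd4: "inv (sg t \<circ> x) s < inv (sg t \<circ> x) (Suc s)"
        using dt ds st unfolding inv_sg_comp[OF xp] ix by simp
      have r4: "reduced n (s # t # r) (sg s \<circ> (sg t \<circ> x))" using reduced_Cons[OF r3 s hd4] by simp
      have "sg s \<circ> (sg t \<circ> x) = sg t \<circ> w"
        unfolding x_def w2_def w1_def st by (rule ext) (simp add: transpose_def)
      hence r4': "reduced n (s # t # r) (sg t \<circ> w)" using r4 by simp
      have eb: "Tp b = Tp (s # t # r)" using IH[OF lb rb r4'] .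
      have br: "T s * T t * T s = T t * T s * T t" using braid[of s] s t st by simp
      have "Tp (s # a) = (T s * T t * T s) * Tp r" by (simp add: ea mult.assoc)
      also have "\<dots> = (T t * T s * T t) * Tp r" by (simp only: br)
      also have "\<dots> = Tp (t # b)" by (simp add: eb mult.assoc)
      finally show ?thesis .
    qed
    show ?thesis
    proof (cases "s = t")
      case True
      have "Tp a = Tp b" using IH[OF la d1(2)] d2(2) True by simp
      thus ?thesis unfolding Cons ws2 True by simp
    next
      case ne: False
      show ?thesis
      proof (cases "t = Suc s \<or> s = Suc t")
        case True
        thus ?thesis
        proof
          assume "t = Suc s"
          thus ?thesis unfolding Cons ws2 using adj d1 d2 la lb by blast
        next
          assume "s = Suc t"
          thus ?thesis unfolding Cons ws2 using adj[of s t b a] d1 d2 la lb by metis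
        qed
      next
        case False
        hence far: "Suc s < t \<or> Suc t < s" using ne by arith
        have s: "s \<in> {1..<n}" and t: "t \<in> {1..<n}" using d1 d2 by auto
        define x where "x = sg t \<circ> (sg s \<circ> w)"
        have xp: "x permutes {1..n}" unfolding x_def
          by (rule permutes_compose[OF permutes_compose[OF wp sg_permutes[OF s]] sg_permutes[OF t]])
        have ix: "inv x = inv w \<circ> sg s \<circ> sg t" unfolding x_def
          using inv_sg_comp[OF permutes_compose[OF wp sg_permutes[OF s]], of t] inv_sg_comp[OF wp, of s]
          by simp
        obtain r where r: "reduced n r x" using reduced_exists[OF xp] by blast
        have hd5: "inv x t < inv x (Suc t)" using d2(1) far unfolding ix by (auto simp: transpose_def)
        have r1: "reduced n (t # r) (sg s \<circ> w)" using reduced_Cons[OF r t hd5] by (simp add: x_def sg_sg)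
        have hd6: "inv x s < inv x (Suc s)" using d1(1) far unfolding ix by (auto simp: transpose_def)
        have r2: "reduced n (s # r) (sg s \<circ> x)" using reduced_Cons[OF r s hd6] by simp
        have "sg s \<circ> x = sg t \<circ> w" unfolding x_def
          by (rule ext) (use far in \<open>auto simp: transpose_def\<close>)
        hence r2': "reduced n (s # r) (sg t \<circ> w)" using r2 by simp
        have ea: "Tp a = Tp (t # r)" using IH[OF la d1(2) r1] .
        have eb: "Tp b = Tp (s # r)" using IH[OF lb d2(2) r2'] .
        have cm: "T s * T t = T t * T s" using comm[OF s t] far by (simp add: Suc_le_eq)
        show ?thesis unfolding Cons ws2
          by (simp add: ea eb mult.assoc[symmetric] cm)
      qed
    qed
  qed
qed

lemma matsumoto: "reduced n ws1 w \<Longrightarrow> reduced n ws2 w \<Longrightarrow> Tp ws1 = Tp ws2"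
  using matsumoto_aux by blast

end



lemma K_ineq:
  assumes x: "x permutes {1..n}" and ab: "1 \<le> a" "a < b" "b \<le> n" and xab: "x a < x b"
  shows "ninv n x < ninv n (x \<circ> transpose a b)"
proof -
  define \<tau> where "\<tau> = transpose a b"
  define y where "y = x \<circ> \<tau>"
  define C where "C = (\<lambda>(p::nat,q::nat). (p \<in> {a,b} \<and> a < q \<and> q < b) \<or> (q \<in> {a,b} \<and> a < p \<and> p < b))"
  define f where "f = (\<lambda>z. if C z then z else (\<tau> (fst z), \<tau> (snd z)))"
  have tt: "\<And>p. \<tau> (\<tau> p) = p" unfolding \<tau>_def by simp
  have Ct: "\<And>p q. C (\<tau> p, \<tau> q) = C (p, q)"
    unfolding C_def \<tau>_def using ab by (auto simp: transpose_def)
  have ff: "\<And>z. f (f z) = z"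
    unfolding f_def using Ct tt by (auto split: prod.splits)
  have inj: "inj f" by (metis ff injI)
  have yt: "\<And>p. y (\<tau> p) = x p" unfolding y_def using tt by simp
  have img: "f ` Inv n x \<subseteq> Inv n y - {(a,b)}"
  proof
    fix z assume "z \<in> f ` Inv n x"
    then obtain p q where pq: "(p,q) \<in> Inv n x" and z: "z = f (p,q)" by auto
    have pq': "1 \<le> p" "p < q" "q \<le> n" "x q < x p" using pq by (auto simp: Inv_def)
    show "z \<in> Inv n y - {(a,b)}"
    proof (cases "C (p,q)")
      case True
      hence z': "z = (p,q)" unfolding z f_def by simp
      have yv: "y p = (if p = a then x b else if p = b then x a else x p)"
           "y q = (if q = a then x b else if q = b then x a else x q)"
        unfolding y_def \<tau>_def by (auto simp: transpose_def)
      from True pq' show ?thesis unfolding z' C_def using ab xab yv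
        by (auto simp: Inv_def)
    next
      case False
      hence z': "z = (\<tau> p, \<tau> q)" unfolding z f_def by simp
      have nab: "(p,q) \<noteq> (a,b)" using pq' xab by auto
      have lt: "\<tau> p < \<tau> q" using False pq' nab ab unfolding C_def \<tau>_def
        by (auto simp: transpose_def)
      have rng: "1 \<le> \<tau> p" "\<tau> q \<le> n" using pq' ab unfolding \<tau>_def
        by (auto simp: transpose_def)
      have "(\<tau> p, \<tau> q) \<noteq> (a,b)" using pq' ab unfolding \<tau>_def
        by (auto simp: transpose_def)
      thus ?thesis unfolding z' using lt rng yt pq' by (auto simp: Inv_def)
    qed
  qed
  have abI: "(a,b) \<in> Inv n y" unfolding Inv_def y_def \<tau>_def using ab xab by simp
  have "card (Inv n x) = card (f ` Inv n x)" using card_image[OF inj_on_subset[OF inj]] by simp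
  also have "\<dots> \<le> card (Inv n y - {(a,b)})" by (rule card_mono) (use img in auto)
  also have "\<dots> < card (Inv n y)" using abI card_gt_0_iff[of "Inv n y"] by fastforce
  finally show ?thesis unfolding ninv_def y_def \<tau>_def .
qed

lemma transpose_permutes_n: "1 \<le> a \<Longrightarrow> a < b \<Longrightarrow> b \<le> n \<Longrightarrow> transpose a b permutes {1..(n::nat)}"
  by (rule permutes_swap_id) auto

lemma K_step:
  assumes x: "x permutes {1..n}" and ab: "1 \<le> a" "a < b" "b \<le> n" and xab: "x a < x b"
  shows "bruhat_step n x (x \<circ> transpose a b)"
proof -
  have p2: "x \<circ> transpose a b permutes {1..n}"
    by (rule permutes_compose[OF transpose_permutes_n[OF ab] x])
  show ?thesis unfolding bruhat_step_def plen_eq[OF x] plen_eq[OF p2]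
    using x ab K_ineq[OF x ab xab] by blast
qed

lemma step_inc:
  assumes "bruhat_step n u w"
  obtains a b where "1 \<le> a" "a < b" "b \<le> n" "w = u \<circ> transpose a b" "u a < u b"
    "u permutes {1..n}" "w permutes {1..n}"
proof -
  from assms obtain a b where u: "u permutes {1..n}" and ab: "1 \<le> a" "a < b" "b \<le> n"
    and w: "w = u \<circ> transpose a b" and pl: "plen n u < plen n w"
    unfolding bruhat_step_def by blast
  have wp: "w permutes {1..n}" unfolding w by (rule permutes_compose[OF transpose_permutes_n[OF ab] u])
  have "u a \<noteq> u b" using permutes_inj[OF u] ab by (auto dest: injD)
  moreover have "\<not> u b < u a"
  proof
    assume "u b < u a"
    have wu: "w \<circ> transpose a b = u" unfolding w by (rule ext) simp
    have "w a < w b" using \<open>u b < u a\<close> unfolding w by simp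
    from K_ineq[OF wp ab this] have "ninv n w < ninv n u" unfolding wu .
    thus False using pl unfolding plen_eq[OF u] plen_eq[OF wp] by simp
  qed
  ultimately have "u a < u b" by simp
  thus ?thesis using that ab w u wp by blast
qed

lemma B1:
  assumes x: "x permutes {1..n}" and i: "i \<in> {1..<n}" and d: "inv x i < inv x (Suc i)"
  shows "bruhat_step n x (sg i \<circ> x)"
proof -
  have e: "sg i \<circ> x = x \<circ> transpose (inv x i) (inv x (Suc i))"
    by (rule transpose_comp_eq[OF permutes_bij[OF x]])
  have xi: "\<And>k. inv x k \<in> {1..n} \<longleftrightarrow> k \<in> {1..n}"
    by (rule permutes_in_image[OF permutes_inv[OF x]])
  have r: "1 \<le> inv x i" "inv x (Suc i) \<le> n" using xi[of i] xi[of "Suc i"] i by auto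
  have "x (inv x i) < x (inv x (Suc i))" using x by (simp add: permutes_inverses)
  from K_step[OF x r(1) d r(2) this] show ?thesis unfolding e .
qed

lemma Z1:
  assumes st: "bruhat_step n u w" and i: "i \<in> {1..<n}"
  shows "w = sg i \<circ> u \<or> bruhat_step n (sg i \<circ> u) (sg i \<circ> w)"
proof -
  obtain a b where ab: "1 \<le> a" "a < b" "b \<le> n" and w: "w = u \<circ> transpose a b"
    and uab: "u a < u b" and u: "u permutes {1..n}" using step_inc[OF st] by blast
  have inj: "inj u" using permutes_inj[OF u] .
  show ?thesis
  proof (cases "u a = i \<and> u b = Suc i")
    case True
    have "w = sg i \<circ> u"
    proof
      fix y
      show "w y = (sg i \<circ> u) y"
      proof (cases "y = a \<or> y = b")
        case True thus ?thesis using \<open>u a = i \<and> u b = Suc i\<close> ab unfolding w by auto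
      next
        case False
        hence "u y \<noteq> u a" "u y \<noteq> u b" using inj by (metis injD)+
        hence "u y \<noteq> i" "u y \<noteq> Suc i" using \<open>u a = i \<and> u b = Suc i\<close> by simp_all
        thus ?thesis using False unfolding w by (simp add: transpose_def)
      qed
    qed
    thus ?thesis by simp
  next
    case False
    have ne: "u a \<noteq> u b" using uab by simp
    have lt2: "(sg i \<circ> u) a < (sg i \<circ> u) b"
      using transpose_less_iff[OF ne, of i] False uab by auto
    show ?thesis using K_step[OF permutes_compose[OF u sg_permutes[OF i]] ab lt2]
      unfolding w comp_assoc by blast
  qed
qed

lemma lift:
  assumes lt: "bruhat_lt n u w" and i: "i \<in> {1..<n}" and w: "w permutes {1..n}"
    and d: "inv w i < inv w (Suc i)"
  shows "bruhat_lt n (sg i \<circ> u) (sg i \<circ> w)"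
proof -
  have top: "bruhat_lt n w (sg i \<circ> w)" unfolding bruhat_lt_def using B1[OF w i d] by auto
  from lt[unfolded bruhat_lt_def] show ?thesis
  proof (induction rule: converse_tranclp_induct)
    case (base y)
    from Z1[OF base i] show ?case
    proof
      assume "w = sg i \<circ> y"
      hence "sg i \<circ> y = w" by (simp add: sg_sg)
      thus ?thesis using top by (simp only:)
    qed (metis bruhat_lt_def tranclp.r_into_trancl)
  next
    case (step y z)
    from Z1[OF step(1) i] show ?case
    proof
      assume "z = sg i \<circ> y"
      hence "sg i \<circ> y = z" by (simp add: sg_sg)
      moreover have "bruhat_lt n z (sg i \<circ> w)"
        using step(2) top unfolding bruhat_lt_def by auto
      ultimately show ?thesis by (simp only:)
    next
      assume "bruhat_step n (sg i \<circ> y) (sg i \<circ> z)"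
      thus ?thesis using step(3) unfolding bruhat_lt_def by (metis tranclp.r_into_trancl tranclp_trans)
    qed
  qed
qed

lemma bruhat_lt_trans: "bruhat_lt n a b \<Longrightarrow> bruhat_lt n b c \<Longrightarrow> bruhat_lt n a c"
  unfolding bruhat_lt_def by auto

lemma bruhat_lt_perm: "bruhat_lt n a b \<Longrightarrow> a permutes {1..n}"
  unfolding bruhat_lt_def by (induction rule: converse_tranclp_induct) (auto simp: bruhat_step_def)




lemma rinv_mult: "\<exists>y. x * y = (1::'r::idom) \<Longrightarrow> x * rinv x = 1"
proof -
  assume "\<exists>y. x * y = 1"
  then obtain y where y: "x * y = 1" by blast
  hence x0: "x \<noteq> 0" by auto
  have "\<exists>!y. x * y = 1"
  proof
    show "x * y = 1" by (rule y)
    fix y' assume "x * y' = 1"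
    with y have "x * y' = x * y" by simp
    thus "y' = y" using x0 by simp
  qed
  thus ?thesis unfolding rinv_def by (rule theI')
qed

locale shoji =
  fixes \<phi> :: "'r::idom \<Rightarrow> 'a::ring_1" and n r :: nat and q :: 'r and u :: "nat \<Rightarrow> 'r"
    and t T :: "nat \<Rightarrow> 'a"
  assumes alg: "is_R_algebra \<phi>" and rel: "shoji_relations n r q u \<phi> t T"
    and qinv: "\<exists>y. q * y = 1"
begin

abbreviation RT where "RT \<equiv> Rt \<phi> t n"

lemma phi1: "\<phi> 1 = 1" and phi_add: "\<phi> (x + y) = \<phi> x + \<phi> y"
  and phi_mult: "\<phi> (x * y) = \<phi> x * \<phi> y" and phi_comm: "\<phi> x * a = a * \<phi> x"
  using alg unfolding is_R_algebra_def by blast+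

lemma phi0: "\<phi> 0 = 0"
proof -
  have "\<phi> (0 + 0) = \<phi> 0 + \<phi> 0" by (rule phi_add)
  thus ?thesis by simp
qed

lemma phi_neg: "\<phi> (- x) = - \<phi> x"
proof -
  have "\<phi> (x + - x) = \<phi> x + \<phi> (- x)" by (rule phi_add)
  hence "\<phi> x + \<phi> (- x) = 0" by (simp add: phi0)
  from minus_unique[OF this] show ?thesis by simp
qed

lemma Rt0: "0 \<in> RT" using Rt.scal[of \<phi> 0 t n] by (simp add: phi0)
lemma Rt1: "1 \<in> RT" using Rt.scal[of \<phi> 1 t n] by (simp add: phi1)
lemma Rt_diff: "x \<in> RT \<Longrightarrow> y \<in> RT \<Longrightarrow> x - y \<in> RT"
  by (metis Rt.add Rt.neg diff_conv_add_uminus)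

lemma Rt_sum: "(\<And>x. x \<in> A \<Longrightarrow> f x \<in> RT) \<Longrightarrow> sum f A \<in> RT"
proof (induction A rule: infinite_finite_induct)
  case (infinite A) thus ?case using Rt0 by simp
next
  case empty thus ?case using Rt0 by simp
next
  case (insert x F) thus ?case by (simp add: Rt.add)
qed

lemma Rt_prod_list: "(\<And>x. x \<in> set xs \<Longrightarrow> x \<in> RT) \<Longrightarrow> prod_list xs \<in> RT"
  by (induction xs) (auto simp: Rt1 Rt.mult)

lemma Rt_pow: "x \<in> RT \<Longrightarrow> x ^ k \<in> RT"
  by (induction k) (auto simp: Rt1 Rt.mult)

lemma Rt_peval: "x \<in> RT \<Longrightarrow> peval \<phi> p x \<in> RT"
  unfolding peval_def by (rule Rt_sum) (auto intro: Rt.mult Rt.scal Rt_pow)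

lemma Rt_t: "k \<in> {1..n} \<Longrightarrow> t k \<in> RT" by (rule Rt.gen_t)

lemma Rt_mix: "j \<in> {2..n} \<Longrightarrow> mixterm r q u \<phi> t j \<in> RT"
  unfolding mixterm_def
  by (intro Rt.mult Rt.scal Rt_sum) (auto intro!: Rt.mult Rt.scal Rt_peval Rt_t)

lemma Rt_Bp: "Bp n r q u \<phi> t i j \<in> RT"
  unfolding Bp_def bk_def
  by (intro Rt.mult Rt.scal Rt_sum Rt_prod_list)
     (auto intro!: Rt.mult Rt.scal Rt_prod_list Rt_diff Rt_t)

lemma lemA:
  assumes j: "j \<in> {1..<n}" and x: "x \<in> RT"
  shows "\<exists>a b. a \<in> RT \<and> b \<in> RT \<and> T j * x = a * T j + b"
  using x
proof (induction rule: Rt.induct)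
  case (scal c)
  show ?case using phi_comm[of c "T j"] Rt0 by (intro exI[of _ "\<phi> c"] exI[of _ 0]) (auto intro: Rt.scal)
next
  case (gen_t k)
  note R = rel[unfolded shoji_relations_def]
  show ?case
  proof (cases "k = Suc j")
    case True
    have "Suc j \<in> {2..n}" using j by auto
    moreover have H: "\<forall>j\<in>{2..n}. T (j-1) * t j = t (j-1) * T (j-1) + mixterm r q u \<phi> t j"
      using R by blast
    ultimately have "T j * t (Suc j) = t j * T j + mixterm r q u \<phi> t (Suc j)"
      using bspec[OF H] by fastforce
    thus ?thesis using True j Rt_mix[OF \<open>Suc j \<in> {2..n}\<close>] Rt_t[of j] by auto
  next
    case nj: False
    show ?thesis
    proof (cases "k = j")
      case True
      have "Suc j \<in> {2..n}" using j by auto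
      moreover have H: "\<forall>j\<in>{2..n}. T (j-1) * t (j-1) = t j * T (j-1) - mixterm r q u \<phi> t j"
        using R by blast
      ultimately have "T j * t j = t (Suc j) * T j - mixterm r q u \<phi> t (Suc j)"
        using bspec[OF H] by fastforce
      hence "T j * t j = t (Suc j) * T j + - mixterm r q u \<phi> t (Suc j)" by simp
      thus ?thesis using True j Rt.neg[OF Rt_mix[OF \<open>Suc j \<in> {2..n}\<close>]] Rt_t[of "Suc j"] by auto
    next
      case False
      hence "T j * t k = t k * T j" using R j gen_t nj by auto
      thus ?thesis using Rt_t[OF gen_t] Rt0 by auto
    qed
  qed
next
  case (add x y)
  then obtain a1 b1 a2 b2 where h: "a1 \<in> RT" "b1 \<in> RT" "T j * x = a1 * T j + b1"
    "a2 \<in> RT" "b2 \<in> RT" "T j * y = a2 * T j + b2" by blast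
  show ?case using h by (intro exI[of _ "a1 + a2"] exI[of _ "b1 + b2"])
    (auto simp: distrib_left distrib_right intro: Rt.add)
next
  case (mult x y)
  then obtain a1 b1 a2 b2 where h: "a1 \<in> RT" "b1 \<in> RT" "T j * x = a1 * T j + b1"
    "a2 \<in> RT" "b2 \<in> RT" "T j * y = a2 * T j + b2" by blast
  have "T j * (x * y) = (a1 * T j + b1) * y" by (simp add: h(3) mult.assoc[symmetric])
  also have "\<dots> = a1 * (T j * y) + b1 * y" by (simp add: distrib_right mult.assoc)
  also have "\<dots> = (a1 * a2) * T j + (a1 * b2 + b1 * y)" by (simp add: h(6) distrib_left mult.assoc)
  finally show ?case using h mult by (intro exI[of _ "a1 * a2"] exI[of _ "a1 * b2 + b1 * y"])
    (auto intro: Rt.add Rt.mult)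
next
  case (neg x)
  then obtain a b where h: "a \<in> RT" "b \<in> RT" "T j * x = a * T j + b" by blast
  show ?case using h by (intro exI[of _ "- a"] exI[of _ "- b"]) (auto intro: Rt.neg)
qed

lemma quad:
  assumes i: "i \<in> {1..<n}"
  shows "T i * T i = \<phi> (q - rinv q) * T i + 1"
proof -
  have R: "(T i - \<phi> q) * (T i + \<phi> (rinv q)) = 0" using rel i unfolding shoji_relations_def by auto
  have qq: "\<phi> q * \<phi> (rinv q) = 1" using rinv_mult[OF qinv] phi_mult[of q "rinv q"] phi1 by simp
  have c: "T i * \<phi> (rinv q) = \<phi> (rinv q) * T i" using phi_comm by simp
  have "T i * T i + T i * \<phi> (rinv q) - \<phi> q * T i - \<phi> q * \<phi> (rinv q) = 0"
    using R by (simp add: algebra_simps)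
  hence "T i * T i = \<phi> q * T i - \<phi> (rinv q) * T i + 1" using qq c
    by (simp add: algebra_simps eq_diff_eq)
  moreover have "\<phi> (q - rinv q) = \<phi> q - \<phi> (rinv q)"
    using phi_add[of q "- rinv q"] phi_neg[of "rinv q"] by simp
  ultimately show ?thesis by (simp add: left_diff_distrib)
qed

lemma braidT: "braidT n T"
  using rel unfolding shoji_relations_def braidT_def by auto

end



inductive_set Sp :: "('r::idom \<Rightarrow> 'a::ring_1) \<Rightarrow> (nat \<Rightarrow> 'a) \<Rightarrow> nat \<Rightarrow> (nat \<Rightarrow> 'a)
    \<Rightarrow> (nat \<Rightarrow> nat) set \<Rightarrow> 'a set"
  for \<phi> t n T V where
  zero: "0 \<in> Sp \<phi> t n T V"
| trm: "f \<in> Rt \<phi> t n \<Longrightarrow> v \<in> V \<Longrightarrow> f * Tw n T v \<in> Sp \<phi> t n T V"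
| add: "x \<in> Sp \<phi> t n T V \<Longrightarrow> y \<in> Sp \<phi> t n T V \<Longrightarrow> x + y \<in> Sp \<phi> t n T V"

definition LT :: "nat \<Rightarrow> (nat \<Rightarrow> nat) \<Rightarrow> (nat \<Rightarrow> nat) set" where
  "LT n w = {w'. w' permutes {1..n} \<and> bruhat_lt n w' w}"

context shoji
begin

abbreviation SP where "SP V \<equiv> Sp \<phi> t n T V"

lemma Sp_mono: "x \<in> SP V \<Longrightarrow> V \<subseteq> V' \<Longrightarrow> x \<in> SP V'"
  by (induction rule: Sp.induct) (auto intro: Sp.intros)

lemma Sp_lmult: "x \<in> SP V \<Longrightarrow> c \<in> RT \<Longrightarrow> c * x \<in> SP V"
proof (induction rule: Sp.induct)
  case zero thus ?case by (simp add: Sp.zero)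
next
  case (trm f v) thus ?case using Sp.trm[OF Rt.mult[OF trm(3) trm(1)] trm(2)]
    by (simp add: mult.assoc)
next
  case (add x y) thus ?case by (simp add: distrib_left Sp.add)
qed

lemma Sp_neg: "x \<in> SP V \<Longrightarrow> - x \<in> SP V"
  using Sp_lmult[of x V "- 1"] Rt.neg[OF Rt1] by simp

lemma Sp_diff: "x \<in> SP V \<Longrightarrow> y \<in> SP V \<Longrightarrow> x - y \<in> SP V"
  using Sp.add[OF _ Sp_neg] by (metis diff_conv_add_uminus)

lemma Sp_sum:
  assumes "x \<in> SP V" "finite V"
  shows "\<exists>f. (\<forall>v. f v \<in> RT) \<and> x = (\<Sum>v\<in>V. f v * Tw n T v)"
  using assms(1)
proof (induction rule: Sp.induct)
  case zero thus ?case using Rt0 by (intro exI[of _ "\<lambda>_. 0"]) simp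
next
  case (trm f v)
  show ?case
  proof (intro exI[of _ "\<lambda>v'. if v' = v then f else 0"] conjI)
    show "\<forall>v'. (if v' = v then f else 0) \<in> RT" using trm Rt0 by simp
    show "f * Tw n T v = (\<Sum>v'\<in>V. (if v' = v then f else 0) * Tw n T v')"
    proof -
      have "(\<Sum>v'\<in>V. (if v' = v then f else 0) * Tw n T v') = (\<Sum>v'\<in>V. if v' = v then f * Tw n T v' else 0)"
        by (rule sum.cong) auto
      also have "\<dots> = f * Tw n T v" using trm(2) assms(2) by (simp add: sum.delta')
      finally show ?thesis by simp
    qed
  qed
next
  case (add x y)
  then obtain f g where "\<forall>v. f v \<in> RT" "x = (\<Sum>v\<in>V. f v * Tw n T v)"
    "\<forall>v. g v \<in> RT" "y = (\<Sum>v\<in>V. g v * Tw n T v)" by blast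
  thus ?case by (intro exI[of _ "\<lambda>v. f v + g v"]) (auto intro: Rt.add simp: distrib_right sum.distrib)
qed

interpretation bt: braidT n T by (rule braidT)

lemma Tp_Tw: "reduced n ws w \<Longrightarrow> bt.Tp ws = Tw n T w"
proof -
  assume r: "reduced n ws w"
  hence "w permutes {1..n}" using reduced_iff sprod_permutes by metis
  from bt.matsumoto[OF r redword[OF this]] show ?thesis unfolding Tw_def .
qed

lemma LT_trans: "v \<in> LT n w \<Longrightarrow> LT n v \<subseteq> LT n w"
  unfolding LT_def using bruhat_lt_trans by blast

lemma TSp:
  assumes i: "i \<in> {1..<n}" and v: "v permutes {1..n}" and d: "inv v i < inv v (Suc i)"
    and x: "x \<in> SP (LT n v)"
  shows "T i * x \<in> SP (LT n (sg i \<circ> v))"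
  using x
proof (induction rule: Sp.induct)
  case zero thus ?case by (simp add: Sp.zero)
next
  case (add x y) thus ?case by (simp add: distrib_left Sp.add)
next
  case (trm f v')
  have vw: "v \<in> LT n (sg i \<circ> v)" unfolding LT_def bruhat_lt_def using B1[OF v i d] v by auto
  have sub: "LT n v \<subseteq> LT n (sg i \<circ> v)" by (rule LT_trans[OF vw])
  have v'p: "v' permutes {1..n}" and v'lt: "bruhat_lt n v' v" using trm(2) unfolding LT_def by auto
  obtain a b where ab: "a \<in> RT" "b \<in> RT" "T i * f = a * T i + b" using lemA[OF i trm(1)] by blast
  have eq: "T i * (f * Tw n T v') = a * (T i * Tw n T v') + b * Tw n T v'"
    by (simp add: mult.assoc[symmetric] ab(3) distrib_right)
  have bpart: "b * Tw n T v' \<in> SP (LT n (sg i \<circ> v))"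
    using Sp.trm[OF ab(2) trm(2)] sub Sp_mono by blast
  have apart: "T i * Tw n T v' \<in> SP (LT n (sg i \<circ> v))"
  proof (cases "inv v' i < inv v' (Suc i)")
    case True
    have r: "reduced n (i # redword n v') (sg i \<circ> v')"
      by (rule reduced_Cons[OF redword[OF v'p] i True])
    have "T i * Tw n T v' = Tw n T (sg i \<circ> v')"
      using Tp_Tw[OF r] unfolding Tw_def by simp
    moreover have "sg i \<circ> v' \<in> LT n (sg i \<circ> v)"
      using lift[OF v'lt i v d] permutes_compose[OF v'p sg_permutes[OF i]] unfolding LT_def by auto
    ultimately show ?thesis using Sp.trm[OF Rt1] by fastforce
  next
    case False
    define y where "y = sg i \<circ> v'"
    have yp: "y permutes {1..n}" unfolding y_def by (rule permutes_compose[OF v'p sg_permutes[OF i]])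
    have iy: "inv y = inv v' \<circ> sg i" unfolding y_def by (rule inv_sg_comp[OF v'p])
    have ne: "inv v' i \<noteq> inv v' (Suc i)" by (rule inv_ne[OF v'p])
    have dy: "inv y i < inv y (Suc i)" using False ne unfolding iy by simp
    have yv: "sg i \<circ> y = v'" unfolding y_def by (rule sg_sg)
    have r: "reduced n (i # redword n y) v'" using reduced_Cons[OF redword[OF yp] i dy] yv by simp
    have tv: "Tw n T v' = T i * Tw n T y" using Tp_Tw[OF r] unfolding Tw_def by simp
    have "T i * Tw n T v' = (T i * T i) * Tw n T y" by (simp add: tv mult.assoc)
    also have "\<dots> = \<phi> (q - rinv q) * Tw n T v' + Tw n T y"
      by (simp add: quad[OF i] distrib_right mult.assoc tv)
    finally have e: "T i * Tw n T v' = \<phi> (q - rinv q) * Tw n T v' + Tw n T y" .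
    have ylt: "y \<in> LT n v'" unfolding LT_def bruhat_lt_def using B1[OF yp i dy] yv yp by auto
    have v'in: "v' \<in> LT n (sg i \<circ> v)" using trm(2) sub by blast
    have yin: "y \<in> LT n (sg i \<circ> v)" using LT_trans[OF v'in] ylt by blast
    show ?thesis unfolding e
      using Sp.add[OF Sp.trm[OF Rt.scal v'in] Sp.trm[OF Rt1 yin]] by simp
  qed
  show ?case unfolding eq by (rule Sp.add[OF Sp_lmult[OF apart ab(1)] bpart])
qed

abbreviation Gp where "Gp ws \<equiv> prod_list (map (gen n r q u \<phi> t T) ws)"

lemma main_aux: "reduced n ws w \<Longrightarrow> Gp ws - bt.Tp ws \<in> SP (LT n w)"
proof (induction ws arbitrary: w)
  case Nil thus ?case by (simp add: Sp.zero)
next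
  case (Cons i a)
  note d = desc_of_reduced[OF Cons.prems]
  define v where "v = sg i \<circ> w"
  have vp: "v permutes {1..n}" unfolding v_def by (rule permutes_compose[OF d(3) sg_permutes[OF d(4)]])
  have iv: "inv v = inv w \<circ> sg i" unfolding v_def by (rule inv_sg_comp[OF d(3)])
  have dv: "inv v i < inv v (Suc i)" using d(1) unfolding iv by simp
  have wv: "sg i \<circ> v = w" unfolding v_def by (rule sg_sg)
  have ra: "reduced n a v" using d(2) unfolding v_def .
  have IH: "Gp a - bt.Tp a \<in> SP (LT n v)" by (rule Cons.IH[OF ra])
  define X where "X = Gp a - bt.Tp a"
  define B where "B = Bp n r q u \<phi> t i (i + 1)"
  have P: "bt.Tp a = Tw n T v" by (rule Tp_Tw[OF ra])
  have G: "Gp a = Tw n T v + X" unfolding X_def P by simp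
  have "Gp (i # a) - bt.Tp (i # a) = (T i + B) * (Tw n T v + X) - T i * Tw n T v"
    by (simp add: G P gen_def B_def)
  also have "\<dots> = T i * X + (B * Tw n T v + B * X)" by (simp add: algebra_simps)
  finally have e: "Gp (i # a) - bt.Tp (i # a) = T i * X + (B * Tw n T v + B * X)" .
  have vin: "v \<in> LT n w" unfolding LT_def bruhat_lt_def using B1[OF vp d(4) dv] wv vp by auto
  have BR: "B \<in> RT" unfolding B_def by (rule Rt_Bp)
  have XS: "X \<in> SP (LT n v)" unfolding X_def by (rule IH)
  have t1: "T i * X \<in> SP (LT n w)" using TSp[OF d(4) vp dv XS] wv by simp
  have t2: "B * Tw n T v \<in> SP (LT n w)" by (rule Sp.trm[OF BR vin])
  have t3: "B * X \<in> SP (LT n w)" using Sp_lmult[OF XS BR] LT_trans[OF vin] Sp_mono by blast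
  show ?case unfolding e by (intro Sp.add t1 t2 t3)
qed

lemma main:
  assumes w: "w permutes {1..n}"
  shows "gw n r q u \<phi> t T w - Tw n T w \<in>
    {\<Sum>w'\<in>{w'. w' permutes {1..n} \<and> bruhat_lt n w' w}. f w' * Tw n T w' | f.
       \<forall>w'. f w' \<in> Rt \<phi> t n}"
proof -
  have r: "reduced n (redword n w) w" by (rule redword[OF w])
  have "gw n r q u \<phi> t T w - Tw n T w \<in> SP (LT n w)"
    using main_aux[OF r] unfolding gw_def Tw_def .
  moreover have "finite (LT n w)"
    by (rule finite_subset[OF _ finite_permutations[of "{1..n}"]]) (auto simp: LT_def)
  ultimately obtain f where "\<forall>v. f v \<in> RT" "gw n r q u \<phi> t T w - Tw n T w = (\<Sum>v\<in>LT n w. f v * Tw n T v)"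
    using Sp_sum by blast
  thus ?thesis unfolding LT_def by blast
qed

end

theorem lemma3p8:
  fixes \<phi> :: "'r::idom \<Rightarrow> 'a::ring_1"
    and n r :: nat and q :: 'r and u :: "nat \<Rightarrow> 'r"
    and t T :: "nat \<Rightarrow> 'a" and w :: "nat \<Rightarrow> nat"
  assumes "n \<ge> 2" and "r \<ge> 1"
    and "\<exists>y. q * y = 1" and "\<exists>y. Delta r u * y = 1"
    and "is_R_algebra \<phi>"
    and "shoji_relations n r q u \<phi> t T"
    and "w permutes {1..n}"
  shows "gw n r q u \<phi> t T w - Tw n T w \<in>
    {\<Sum>w'\<in>{w'. w' permutes {1..n} \<and> bruhat_lt n w' w}. f w' * Tw n T w' | f.
       \<forall>w'. f w' \<in> Rt \<phi> t n}"
proof -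
  interpret shoji \<phi> n r q u t T using assms(3,5,6) by unfold_locales
  show ?thesis by (rule main[OF assms(7)])
qed

end
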